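(* Let $p$ be an odd prime, $n\ge1$, $r>t\ge0$ integers and $c\in\mathbb{F}_p^*$. If $f(x)=\mathrm{Tr}_n(cx^{p^r+1}-cx^{p^t+1})$ with $\gcd(n,r+t)=\gcd(n,r-t)=\gcd(n,p)=1$, then the kernel in $\mathbb{F}_{p^n}$ of the linearized polynomial $L(z)=c\big(z+z^{p^{2r}}-z^{p^{r-t}}-z^{p^{r+t}}\big)$ corresponding to $f$ is $\mathbb{F}_p$. If $f(x)=\mathrm{Tr}_n(cx^{p^r+1}+cx^{p^t+1})$ with $\gcd(n,2(r+t))=\gcd(n,2(r-t))=2$, $r-t$ odd and $\gcd(n,p)=1$, then the kernel in $\mathbb{F}_{p^n}$ of the corresponding linearized polynomial $L(z)=c\big(z+z^{p^{2r}}+z^{p^{r-t}}+z^{p^{r+t}}\big)$ is the set of roots of $z^p+z$, all of which lie in $\mathbb{F}_{p^2}$.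
   Context: $\mathrm{Tr}_n$ denotes the absolute trace $\mathbb{F}_{p^n}\to\mathbb{F}_p$. The kernel of $L$ means $\{z\in\mathbb{F}_{p^n}: L(z)=0\}$. *)

theory Defs
  imports Main "HOL-Computational_Algebra.Primes"
begin

definition prime_subfield :: "'a::field set" where
  "prime_subfield = range of_int"

text \<open>The subfield with p^d elements inside a finite field of characteristic p (when d divides n):
  the fixed points of the d-th power of Frobenius.\<close>
definition subfield_pow :: "nat \<Rightarrow> nat \<Rightarrow> 'a::field set" where
  "subfield_pow p d = {x. x ^ (p ^ d) = x}"

end

theory Submission
  imports Defs "HOL-Computational_Algebra.Polynomial"
begin

definition fr :: "nat \<Rightarrow> nat \<Rightarrow> 'a::field \<Rightarrow> 'a" where
  "fr p k z = z ^ (p ^ k)"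

lemma field_power_card_same:
  fixes x :: "'a :: {field,finite}"
  shows   "x ^ card (UNIV :: 'a set) = x"
proof (cases "x = 0")
  case False
  have "x * (\<Prod>y\<in>UNIV-{0}. x * y) = x * x ^ (card (UNIV :: 'a set) - 1) * \<Prod>(UNIV-{0})"
    by (simp add: prod.distrib mult_ac)
  also have "x * x ^ (card (UNIV :: 'a set) - 1) = x ^ Suc (card (UNIV :: 'a set) - 1)"
    by (subst power_Suc) auto
  also have "Suc (card (UNIV :: 'a set) - 1) = card (UNIV :: 'a set)"
    using finite_UNIV_card_ge_0[where ?'a = 'a] by simp
  also have "(\<Prod>y\<in>UNIV-{0}. x * y) = (\<Prod>y\<in>UNIV-{0}. y)"
    by (rule prod.reindex_bij_witness[of _ "\<lambda>y. y / x" "\<lambda>y. x * y"]) (use False in auto)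
  finally show ?thesis
    by simp
qed (use finite_UNIV_card_ge_0[where ?'a = 'a] in auto)

context
  fixes p :: nat
  assumes pp: "prime p" and op: "odd p" and ch: "CHAR('a::field) = p"
begin

lemma fr_add: "fr p k (x + y) = fr p k x + fr p k (y::'a)"
  unfolding fr_def using pp ch by (intro freshmans_dream') auto

lemma fr_neg: "fr p k (- x) = - fr p k (x::'a)"
proof -
  have "odd (p ^ k)" using op by simp
  thus ?thesis unfolding fr_def by (simp add: power_minus_odd)
qed

lemma fr_diff: "fr p k (x - y) = fr p k x - fr p k (y::'a)"
  by (metis diff_conv_add_uminus fr_add fr_neg)

lemma fr_mult: "fr p k (x * y) = fr p k x * fr p k (y::'a)"
  unfolding fr_def by (simp add: power_mult_distrib)

lemma fr_power: "fr p k (x ^ m) = (fr p k (x::'a)) ^ m"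
  unfolding fr_def by (simp add: power_mult[symmetric] mult.commute)

lemma fr_one: "fr p k (1::'a) = 1"
  unfolding fr_def by simp

lemma fr_ofnat: "fr p k (of_nat m :: 'a) = of_nat m"
  using pp prime_gt_0_nat by (induction m) (simp_all add: fr_add fr_one, simp add: fr_def)

lemma fr_m1: "fr p k (- 1 :: 'a) = - 1"
  by (simp add: fr_neg fr_one)

lemma fr_comp: "fr p a (fr p b (x::'a)) = fr p (a + b) x"
  unfolding fr_def by (simp add: power_mult[symmetric] power_add mult.commute)

lemma fr_0: "fr p 0 (x::'a) = x"
  unfolding fr_def by simp

lemma fr_inj: "fr p k x = fr p k (y::'a) \<Longrightarrow> x = y"
proof -
  assume "fr p k x = fr p k y"
  hence "fr p k (x - y) = 0" by (simp add: fr_diff)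
  hence "(x - y) ^ (p ^ k) = 0" unfolding fr_def .
  thus "x = y" using pp prime_gt_0_nat by simp
qed

lemma fr_sub:
  assumes "fr p a x = x" "fr p b x = (x::'a)" "a \<le> b"
  shows "fr p (b - a) x = x"
proof (rule fr_inj[of a])
  have "fr p a (fr p (b - a) x) = fr p b x" using assms(3) by (simp add: fr_comp)
  thus "fr p a (fr p (b - a) x) = fr p a x" using assms by simp
qed

lemma fr_gcd:
  "fr p a x = x \<Longrightarrow> fr p b x = (x::'a) \<Longrightarrow> fr p (gcd a b) x = x"
proof (induction "a+b" arbitrary: a b rule: less_induct)
  case less
  consider "a = 0" | "b = 0" | "0 < a \<and> a \<le> b" | "0 < b \<and> b < a" by linarith
  thus ?case
  proof cases
    case 1 thus ?thesis using less by simp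
  next
    case 2 thus ?thesis using less by simp
  next
    case 3
    have h: "fr p (b - a) x = x" using fr_sub[of a x b] less 3 by simp
    have "fr p (gcd a (b - a)) x = x"
      using less(1)[of a "b - a"] 3 less(2) h by simp
    moreover have "gcd a (b - a) = gcd a b" using 3
      by (metis gcd.commute gcd_diff1_nat)
    ultimately show ?thesis by simp
  next
    case 4
    have h: "fr p (a - b) x = x" using fr_sub[of b x a] less 4 by simp
    have "fr p (gcd (a - b) b) x = x"
      using less(1)[of "a - b" b] 4 less(3) h by simp
    moreover have "gcd (a - b) b = gcd a b" using 4
      by (simp add: gcd_diff1_nat)
    ultimately show ?thesis by simp
  qed
qed

lemma fr_mul_fix: "fr p a x = (x::'a) \<Longrightarrow> fr p (m * a) x = x"
proof (induction m)
  case 0 thus ?case by (simp add: fr_0)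
next
  case (Suc m)
  have "fr p (Suc m * a) x = fr p a (fr p (m * a) x)" by (simp add: fr_comp add.commute)
  thus ?case using Suc by simp
qed

lemma fr_1_all: "fr p 1 x = (x::'a) \<Longrightarrow> fr p k x = x"
  using fr_mul_fix[of 1 x k] by simp

lemma fr_2: "fr p 2 x = (x::'a) \<Longrightarrow> fr p k x = (if even k then x else fr p 1 x)"
proof -
  assume h: "fr p 2 x = x"
  obtain m where m: "k = m * 2 \<or> k = 1 + m * 2"
    by (metis add.commute mult.commute oddE evenE)
  have "fr p (m * 2) x = x" using fr_mul_fix[OF h] .
  moreover have "fr p (1 + m * 2) x = fr p 1 (fr p (m * 2) x)" by (simp add: fr_comp)
  ultimately show ?thesis using m by auto
qed

end

lemma prime_subfield_char:
  fixes p :: nat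
  assumes pp: "prime p" and op: "odd p" and ch: "CHAR('a::{field,finite}) = p"
  shows "{x :: 'a. x ^ p = x} = prime_subfield"
proof -
  let ?S = "{x :: 'a. x ^ p = x}"
  let ?A = "(of_nat :: nat \<Rightarrow> 'a) ` {..<p}"
  have A_sub: "?A \<subseteq> ?S"
    using fr_ofnat[OF pp op ch, of 1] by (auto simp: fr_def)
  have inj: "inj_on (of_nat :: nat \<Rightarrow> 'a) {..<p}"
  proof (rule inj_onI)
    fix a b assume ab: "a \<in> {..<p}" "b \<in> {..<p}" "(of_nat a :: 'a) = of_nat b"
    show "a = b"
    proof (rule ccontr)
      assume "a \<noteq> b"
      then consider "a < b" | "b < a" by linarith
      thus False
      proof cases
        case 1
        hence "(of_nat (b - a) :: 'a) = 0" using ab(3) by (simp add: of_nat_diff)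
        hence "p dvd (b - a)" using ch of_nat_eq_0_iff_char_dvd by metis
        thus False using 1 ab by (simp add: nat_dvd_not_less)
      next
        case 2
        hence "(of_nat (a - b) :: 'a) = 0" using ab(3) by (simp add: of_nat_diff)
        hence "p dvd (a - b)" using ch of_nat_eq_0_iff_char_dvd by metis
        thus False using 2 ab by (simp add: nat_dvd_not_less)
      qed
    qed
  qed
  have cardA: "card ?A = p" using card_image[OF inj] by simp
  define Q :: "'a poly" where "Q = monom 1 p + (- [:0, 1:])"
  have p2: "p \<ge> 2" using pp prime_ge_2_nat by blast
  have degQ: "degree Q = p" unfolding Q_def
    using p2 by (subst degree_add_eq_left) (auto simp: degree_monom_eq)
  hence Qnz: "Q \<noteq> 0" using p2 by auto
  have "?S = {x. poly Q x = 0}" by (auto simp: Q_def poly_monom)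
  hence cardS: "card ?S \<le> p" using card_poly_roots_bound[OF Qnz] degQ by simp
  have "?A = ?S"
    by (rule card_subset_eq) (use A_sub cardA cardS card_mono[OF _ A_sub] in auto)
  moreover have "?A \<subseteq> prime_subfield" unfolding prime_subfield_def
    by (auto intro!: image_eqI[where x = "int _"])
  moreover have "prime_subfield \<subseteq> ?S"
  proof
    fix x :: 'a assume "x \<in> prime_subfield"
    then obtain j where j: "x = of_int j" by (auto simp: prime_subfield_def)
    show "x \<in> ?S"
    proof (cases "j \<ge> 0")
      case True
      hence "x = of_nat (nat j)" using j by simp
      thus ?thesis using fr_ofnat[OF pp op ch, of 1 "nat j"] by (simp add: fr_def)
    next
      case False
      hence "x = - of_nat (nat (- j))" using j by simp
      thus ?thesis using fr_ofnat[OF pp op ch, of 1 "nat (-j)"] fr_neg[OF pp op ch, of 1]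
        by (simp add: fr_def)
    qed
  qed
  ultimately show ?thesis by blast
qed


theorem mainTheorem5:
  fixes p n r t :: nat and c :: "'a::{field,finite}"
  assumes "prime p" and "odd p" and "n \<ge> 1"
    and "CHAR('a) = p" and "card (UNIV :: 'a set) = p ^ n"
    and "t < r"
    and "c \<in> prime_subfield" and "c \<noteq> 0"
  shows
    "(gcd n (r + t) = 1 \<and> gcd n (r - t) = 1 \<and> gcd n p = 1 \<longrightarrow>
       {z :: 'a. c * (z + z ^ (p ^ (2 * r)) - z ^ (p ^ (r - t)) - z ^ (p ^ (r + t))) = 0}
         = prime_subfield)
   \<and> (gcd n (2 * (r + t)) = 2 \<and> gcd n (2 * (r - t)) = 2 \<and> odd (r - t) \<and> gcd n p = 1 \<longrightarrow>
       {z :: 'a. c * (z + z ^ (p ^ (2 * r)) + z ^ (p ^ (r - t)) + z ^ (p ^ (r + t))) = 0}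
         = {z. z ^ p + z = 0}
       \<and> {z :: 'a. z ^ p + z = 0} \<subseteq> subfield_pow p 2)"
proof -
  note pp = assms(1) and op = assms(2) and ch = assms(4)
  note fr_add = fr_add[OF pp op ch] and fr_neg = fr_neg[OF pp op ch]
    and fr_diff = fr_diff[OF pp op ch] and fr_mult = fr_mult[OF pp op ch]
    and fr_power = fr_power[OF pp op ch] and fr_ofnat = fr_ofnat[OF pp op ch]
    and fr_m1 = fr_m1[OF pp op ch] and fr_comp = fr_comp[OF pp op ch]
    and fr_gcd = fr_gcd[OF pp op ch] and fr_mul_fix = fr_mul_fix[OF pp op ch]
    and fr_1_all = fr_1_all[OF pp op ch] and fr_2 = fr_2[OF pp op ch]
  have frn: "fr p n x = x" for x :: 'a
    using field_power_card_same[of x] assms(5) by (simp add: fr_def)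
  have ofn: "of_nat n * (x::'a) = 0 \<Longrightarrow> x = 0" if "gcd n p = 1" for x
  proof -
    assume h: "of_nat n * x = 0"
    have "\<not> p dvd n"
    proof
      assume "p dvd n"
      hence "gcd n p = p" by (metis gcd_nat.absorb_iff2 gcd.commute)
      thus False using that pp by (metis prime_nat_iff not_prime_1)
    qed
    hence "(of_nat n :: 'a) \<noteq> 0" using ch of_nat_eq_0_iff_char_dvd by metis
    thus "x = 0" using h by simp
  qed
  have e2r: "(r - t) + (r + t) = 2 * r" using assms(6) by simp
  have part1: "{z :: 'a. c * (z + z ^ (p ^ (2 * r)) - z ^ (p ^ (r - t)) - z ^ (p ^ (r + t))) = 0}
         = prime_subfield" if H: "gcd n (r + t) = 1" "gcd n (r - t) = 1" "gcd n p = 1"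
  proof (intro set_eqI iffI)
    fix z :: 'a
    assume "z \<in> {z :: 'a. c * (z + z ^ (p ^ (2 * r)) - z ^ (p ^ (r - t)) - z ^ (p ^ (r + t))) = 0}"
    hence E: "z + fr p (2*r) z - fr p (r - t) z - fr p (r + t) z = 0"
      using assms(8) by (simp add: fr_def)
    define w where "w = z - fr p (r + t) z"
    have "fr p (r - t) w = fr p (r - t) z - fr p (2*r) z"
      unfolding w_def by (simp add: fr_diff fr_comp e2r)
    moreover have "w = fr p (r - t) z - fr p (2*r) z" using E unfolding w_def by (simp add: algebra_simps)
    ultimately have "fr p (r - t) w = w" by simp
    hence "fr p (gcd n (r - t)) w = w" using fr_gcd frn by blast
    hence w1: "fr p 1 w = w" using H by simp
    have claim: "fr p (k * (r + t)) z = z - of_nat k * w" for k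
    proof (induction k)
      case 0 thus ?case by (simp add: fr_def)
    next
      case (Suc k)
      have "fr p (Suc k * (r + t)) z = fr p (r + t) (fr p (k * (r + t)) z)"
        by (simp add: fr_comp)
      also have "\<dots> = fr p (r + t) z - of_nat k * w"
        using Suc by (simp add: fr_diff fr_mult fr_ofnat fr_1_all[OF w1])
      also have "\<dots> = z - of_nat (Suc k) * w" unfolding w_def by (simp add: algebra_simps)
      finally show ?case .
    qed
    have "fr p ((r + t) * n) z = z" using fr_mul_fix frn by blast
    hence "of_nat n * w = 0" using claim[of n] by (simp add: mult.commute)
    hence "w = 0" by (rule ofn[OF H(3)])
    hence "fr p (r + t) z = z" unfolding w_def by simp
    hence "fr p (gcd n (r + t)) z = z" using fr_gcd frn by blast
    hence "z ^ p = z" using H by (simp add: fr_def)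
    thus "z \<in> prime_subfield" using prime_subfield_char[OF pp op ch] by blast
  next
    fix z :: 'a assume "z \<in> prime_subfield"
    hence "z ^ p = z" using prime_subfield_char[OF pp op ch] by blast
    hence z1: "fr p 1 z = z" by (simp add: fr_def)
    have "fr p k z = z" for k by (rule fr_1_all[OF z1])
    thus "z \<in> {z :: 'a. c * (z + z ^ (p ^ (2 * r)) - z ^ (p ^ (r - t)) - z ^ (p ^ (r + t))) = 0}"
      by (simp add: fr_def)
  qed
  have part2: "{z :: 'a. c * (z + z ^ (p ^ (2 * r)) + z ^ (p ^ (r - t)) + z ^ (p ^ (r + t))) = 0}
         = {z. z ^ p + z = 0}
       \<and> {z :: 'a. z ^ p + z = 0} \<subseteq> subfield_pow p 2"
    if H: "gcd n (2 * (r + t)) = 2" "gcd n (2 * (r - t)) = 2" "odd (r - t)" "gcd n p = 1"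
  proof -
    have rt: "r + t = (r - t) + 2 * t" using assms(6) by simp
    have oddrt: "odd (r + t)" using H(3) by (subst rt) simp
    have evn: "even n" using H(1) gcd_dvd1[of n "2 * (r + t)"] by simp
    have bck: "fr p 1 z = - z \<Longrightarrow> fr p 2 z = z" for z :: "'a"
    proof -
      assume h: "fr p 1 z = - z"
      have "fr p 2 z = fr p 1 (fr p 1 z)" using fr_comp[of 1 1 z] by (simp add: numeral_2_eq_2)
      thus ?thesis using h by (simp add: fr_neg)
    qed
    have S: "{z :: 'a. c * (z + z ^ (p ^ (2 * r)) + z ^ (p ^ (r - t)) + z ^ (p ^ (r + t))) = 0}
         = {z. z ^ p + z = 0}"
    proof (intro set_eqI iffI)
      fix z :: 'a
      assume "z \<in> {z :: 'a. c * (z + z ^ (p ^ (2 * r)) + z ^ (p ^ (r - t)) + z ^ (p ^ (r + t))) = 0}"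
      hence E: "z + fr p (2*r) z + fr p (r - t) z + fr p (r + t) z = 0"
        using assms(8) by (simp add: fr_def)
      define w where "w = z + fr p (r + t) z"
      have "fr p (r - t) w = fr p (r - t) z + fr p (2*r) z"
        unfolding w_def by (simp add: fr_add fr_comp e2r)
      moreover have "- w = fr p (r - t) z + fr p (2*r) z" using E unfolding w_def
        by (simp add: algebra_simps neg_eq_iff_add_eq_0)
      ultimately have wm: "fr p (r - t) w = - w" by simp
      have "fr p (2 * (r - t)) w = fr p (r - t) (fr p (r - t) w)" by (simp add: fr_comp mult_2)
      hence "fr p (2 * (r - t)) w = w" using wm by (simp add: fr_neg)
      hence "fr p (gcd n (2 * (r - t))) w = w" using fr_gcd frn by blast
      hence w2: "fr p 2 w = w" using H by simp
      have "fr p (r - t) w = fr p 1 w" using fr_2[OF w2, of "r - t"] H(3) by simp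
      hence w1: "fr p 1 w = - w" using wm by simp
      have "fr p (r + t) w = fr p 1 w" using fr_2[OF w2, of "r + t"] oddrt by simp
      hence wrt: "fr p (r + t) w = - w" using w1 by simp
      have claim: "fr p (k * (r + t)) z = (-1) ^ k * (z - of_nat k * w)" for k
      proof (induction k)
        case 0 thus ?case by (simp add: fr_def)
      next
        case (Suc k)
        have "fr p (Suc k * (r + t)) z = fr p (r + t) (fr p (k * (r + t)) z)"
          by (simp add: fr_comp)
        also have "\<dots> = (-1) ^ k * (fr p (r + t) z + of_nat k * w)"
          using Suc by (simp add: fr_diff fr_mult fr_ofnat fr_power fr_m1 wrt)
        also have "\<dots> = (-1) ^ Suc k * (z - of_nat (Suc k) * w)"
          unfolding w_def by (simp add: algebra_simps)
        finally show ?case .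
      qed
      have "fr p ((r + t) * n) z = z" using fr_mul_fix frn by blast
      hence "z - of_nat n * w = z" using claim[of n] evn by (simp add: mult.commute)
      hence "of_nat n * w = 0" by simp
      hence "w = 0" by (rule ofn[OF H(4)])
      hence zr: "fr p (r + t) z = - z" unfolding w_def by (simp add: eq_neg_iff_add_eq_0 add.commute)
      have "fr p (2 * (r + t)) z = fr p (r + t) (fr p (r + t) z)" by (simp only: fr_comp mult_2)
      hence "fr p (2 * (r + t)) z = z" using zr by (simp add: fr_neg)
      hence "fr p (gcd n (2 * (r + t))) z = z" using fr_gcd frn by blast
      hence z2: "fr p 2 z = z" using H by simp
      have "fr p (r + t) z = fr p 1 z" using fr_2[OF z2, of "r + t"] oddrt by simp
      hence "fr p 1 z = - z" using zr by simp
      thus "z \<in> {z. z ^ p + z = 0}" by (simp add: fr_def)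
    next
      fix z :: 'a assume "z \<in> {z. z ^ p + z = 0}"
      hence z1: "fr p 1 z = - z" by (simp add: fr_def eq_neg_iff_add_eq_0)
      have z2: "fr p 2 z = z" using bck[OF z1] .
      have "fr p (2 * r) z = z" using fr_2[OF z2, of "2 * r"] by simp
      moreover have "fr p (r - t) z = fr p 1 z" using fr_2[OF z2, of "r - t"] H(3) by simp
      moreover have "fr p (r + t) z = fr p 1 z" using fr_2[OF z2, of "r + t"] oddrt by simp
      ultimately have "fr p (2 * r) z = z" "fr p (r - t) z = - z" "fr p (r + t) z = - z"
        using z1 by simp_all
      thus "z \<in> {z :: 'a. c * (z + z ^ (p ^ (2 * r)) + z ^ (p ^ (r - t)) + z ^ (p ^ (r + t))) = 0}"
        by (simp add: fr_def)
    qed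
    moreover have "{z :: 'a. z ^ p + z = 0} \<subseteq> subfield_pow p 2"
    proof
      fix z :: 'a assume "z \<in> {z. z ^ p + z = 0}"
      hence z1: "fr p 1 z = - z" by (simp add: fr_def eq_neg_iff_add_eq_0)
      show "z \<in> subfield_pow p 2" using bck[OF z1] by (simp add: fr_def subfield_pow_def)
    qed
    ultimately show ?thesis by blast
  qed
  show ?thesis
    apply (rule conjI; rule impI)
     apply (rule part1; simp)
    apply (rule part2; simp)
    done
qed

end
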